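(* Fix a state $s$, a receiver utility $u:\mathcal S\times\Omega\times\mathcal A\to[0,1]$, a function $Q:\mathcal S\times\Omega\times\mathcal A\to[0,H]$ and a prior $\mu\in\Delta(\Omega)$ that is $(p_0,D)$-regular at $s$, i.e. $\Pr_{\omega\sim\mu}[\omega\in\mathcal W_{s,a}(D)]\ge p_0$ for every $a\in\mathcal A$. Then for every $\epsilon>0$, $$\mathrm{Gap}\big(s,\mu,\mathbb B(\mu,\epsilon);Q\big)\le\frac{H\epsilon}{p_0D}.$$
   Context: $\mathcal A$ is a finite action set, $\mathcal S$ a state space and $\Omega$ an outcome space; $\Delta(\Omega)$ is the set of probability distributions on $\Omega$ (with densities/mass functions $\mu(\omega)$), and $\|\mu-\mu'\|_1=\int_\Omega|\mu(\omega)-\mu'(\omega)|\,\mathrm d\omega$. A signaling scheme $\pi$ assigns to each $(s,\omega)$ a distribution $\pi(\cdot\mid s,\omega)\in\Delta(\mathcal A)$. For a prior $\mu$ and utility $u$, $\mathrm{Pers}(\mu,u)$ is the set of $\pi$ with $\int_\Omega\mu(\omega)\pi(a\mid s,\omega)[u(s,\omega,a)-u(s,\omega,a')]\,\mathrm d\omega\ge0$ for all $a,a'\in\mathcal A$ and states $s$; for a set $\mathcal B\subseteq\Delta(\Omega)$, $\mathrm{Pers}(\mathcal B,u)=\bigcap_{\mu'\in\mathcal B}\mathrm{Pers}(\mu',u)$. $\langle Q,\mu\otimes\pi\rangle(s)=\mathbb E_{\omega\sim\mu,\,a\sim\pi(\cdot\mid s,\omega)}[Q(s,\omega,a)]$.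 The robustness gap is $\mathrm{Gap}(s,\mu,\mathcal B;Q)=\max_{\pi\in\mathrm{Pers}(\mu,u)}\langle Q,\mu\otimes\pi\rangle(s)-\max_{\pi\in\mathrm{Pers}(\mathcal B,u)}\langle Q,\mu\otimes\pi\rangle(s)$. $\mathbb B(\mu,\epsilon)=\{\mu'\in\Delta(\Omega):\|\mu-\mu'\|_1\le\epsilon\}$. $\mathcal W_{s,a}(D)=\{\omega:u(s,\omega,a)-u(s,\omega,a')\ge D\ \forall a'\in\mathcal A\setminus\{a\}\}$. *)

theory Defs
  imports "HOL-Analysis.Analysis"
begin

text \<open>Outcome space: a measure space M (base measure, e.g. counting or Lebesgue).
  Priors are densities w.r.t. M. Actions: a finite type 'a. States: type 's.\<close>

definition priors :: "'w measure \<Rightarrow> ('w \<Rightarrow> real) set" where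
  "priors M = {\<mu>. \<mu> \<in> borel_measurable M \<and> (\<forall>\<omega>\<in>space M. 0 \<le> \<mu> \<omega>)
              \<and> integrable M \<mu> \<and> (\<integral>\<omega>. \<mu> \<omega> \<partial>M) = 1}"

definition l1dist :: "'w measure \<Rightarrow> ('w \<Rightarrow> real) \<Rightarrow> ('w \<Rightarrow> real) \<Rightarrow> real" where
  "l1dist M \<mu> \<mu>' = (\<integral>\<omega>. \<bar>\<mu> \<omega> - \<mu>' \<omega>\<bar> \<partial>M)"

definition l1ball :: "'w measure \<Rightarrow> ('w \<Rightarrow> real) \<Rightarrow> real \<Rightarrow> ('w \<Rightarrow> real) set" where
  "l1ball M \<mu> \<epsilon> = {\<mu>' \<in> priors M. l1dist M \<mu> \<mu>' \<le> \<epsilon>}"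

text \<open>Signaling schemes: pi s w a = probability of recommending a in state s, outcome w;
  a distribution on the finite action set, measurable in the outcome.\<close>
definition schemes :: "'w measure \<Rightarrow> ('s \<Rightarrow> 'w \<Rightarrow> 'a::finite \<Rightarrow> real) set" where
  "schemes M = {\<pi>. \<forall>s. (\<forall>a. (\<lambda>\<omega>. \<pi> s \<omega> a) \<in> borel_measurable M)
      \<and> (\<forall>\<omega>\<in>space M. (\<forall>a. 0 \<le> \<pi> s \<omega> a) \<and> (\<Sum>a\<in>UNIV. \<pi> s \<omega> a) = 1)}"

definition Pers :: "'w measure \<Rightarrow> ('w \<Rightarrow> real) \<Rightarrow> ('s \<Rightarrow> 'w \<Rightarrow> 'a::finite \<Rightarrow> real)
    \<Rightarrow> ('s \<Rightarrow> 'w \<Rightarrow> 'a \<Rightarrow> real) set" where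
  "Pers M \<mu> u = {\<pi> \<in> schemes M. \<forall>s a a'.
      (\<integral>\<omega>. \<mu> \<omega> * \<pi> s \<omega> a * (u s \<omega> a - u s \<omega> a') \<partial>M) \<ge> 0}"

definition PersSet :: "'w measure \<Rightarrow> ('w \<Rightarrow> real) set \<Rightarrow> ('s \<Rightarrow> 'w \<Rightarrow> 'a::finite \<Rightarrow> real)
    \<Rightarrow> ('s \<Rightarrow> 'w \<Rightarrow> 'a \<Rightarrow> real) set" where
  "PersSet M B u = {\<pi> \<in> schemes M. \<forall>\<mu>'\<in>B. \<pi> \<in> Pers M \<mu>' u}"

definition pairing :: "'w measure \<Rightarrow> ('s \<Rightarrow> 'w \<Rightarrow> 'a::finite \<Rightarrow> real) \<Rightarrow> ('w \<Rightarrow> real)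
    \<Rightarrow> ('s \<Rightarrow> 'w \<Rightarrow> 'a \<Rightarrow> real) \<Rightarrow> 's \<Rightarrow> real" where
  "pairing M Q \<mu> \<pi> s = (\<integral>\<omega>. \<mu> \<omega> * (\<Sum>a\<in>UNIV. \<pi> s \<omega> a * Q s \<omega> a) \<partial>M)"

definition Gap :: "'w measure \<Rightarrow> ('s \<Rightarrow> 'w \<Rightarrow> 'a::finite \<Rightarrow> real) \<Rightarrow> 's \<Rightarrow> ('w \<Rightarrow> real)
    \<Rightarrow> ('w \<Rightarrow> real) set \<Rightarrow> ('s \<Rightarrow> 'w \<Rightarrow> 'a \<Rightarrow> real) \<Rightarrow> real" where
  "Gap M u s \<mu> B Q =
     (SUP \<pi>\<in>Pers M \<mu> u. pairing M Q \<mu> \<pi> s) - (SUP \<pi>\<in>PersSet M B u. pairing M Q \<mu> \<pi> s)"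

definition Wset :: "'w measure \<Rightarrow> ('s \<Rightarrow> 'w \<Rightarrow> 'a \<Rightarrow> real) \<Rightarrow> 's \<Rightarrow> 'a \<Rightarrow> real \<Rightarrow> 'w set" where
  "Wset M u s a D = {\<omega> \<in> space M. \<forall>a'. a' \<noteq> a \<longrightarrow> u s \<omega> a - u s \<omega> a' \<ge> D}"

definition regular :: "'w measure \<Rightarrow> ('s \<Rightarrow> 'w \<Rightarrow> 'a \<Rightarrow> real) \<Rightarrow> ('w \<Rightarrow> real) \<Rightarrow> 's
    \<Rightarrow> real \<Rightarrow> real \<Rightarrow> bool" where
  "regular M u \<mu> s p0 D = (\<forall>a. (\<integral>\<omega>. \<mu> \<omega> * indicator (Wset M u s a D) \<omega> \<partial>M) \<ge> p0)"

end

theory Submission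
  imports Defs
begin

lemma int_bdd:
  assumes "\<mu> \<in> priors M" "f \<in> borel_measurable M" "\<And>\<omega>. \<omega> \<in> space M \<Longrightarrow> \<bar>f \<omega>\<bar> \<le> C"
  shows "integrable M (\<lambda>\<omega>. \<mu> \<omega> * f \<omega>)"
proof (rule Bochner_Integration.integrable_bound[of M "\<lambda>\<omega>. C * \<mu> \<omega>"])
  show "integrable M (\<lambda>\<omega>. C * \<mu> \<omega>)" using assms(1) by (auto simp: priors_def)
  show "(\<lambda>\<omega>. \<mu> \<omega> * f \<omega>) \<in> borel_measurable M" using assms(1,2) by (auto simp: priors_def)
  show "AE x in M. norm (\<mu> x * f x) \<le> norm (C * \<mu> x)"
  proof (rule AE_I2)
    fix x assume x: "x \<in> space M"
    have m: "0 \<le> \<mu> x" using assms(1) x by (auto simp: priors_def)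
    have "\<bar>\<mu> x * f x\<bar> = \<mu> x * \<bar>f x\<bar>" using m by (simp add: abs_mult)
    also have "\<dots> \<le> \<mu> x * C" using m assms(3)[OF x] by (simp add: mult_left_mono)
    also have "\<dots> \<le> \<bar>C * \<mu> x\<bar>" by (simp add: mult.commute)
    finally show "norm (\<mu> x * f x) \<le> norm (C * \<mu> x)" by simp
  qed
qed

lemma perturb:
  assumes P: "\<mu> \<in> priors M" "\<mu>' \<in> priors M" and f: "f \<in> borel_measurable M"
    and b: "\<And>\<omega>. \<omega> \<in> space M \<Longrightarrow> \<bar>f \<omega>\<bar> \<le> 1"
  shows "(\<integral>\<omega>. \<mu>' \<omega> * f \<omega> \<partial>M) \<ge> (\<integral>\<omega>. \<mu> \<omega> * f \<omega> \<partial>M) - l1dist M \<mu> \<mu>'"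
proof -
  have i1: "integrable M (\<lambda>\<omega>. \<mu> \<omega> * f \<omega>)" by (rule int_bdd[OF P(1) f b])
  have i2: "integrable M (\<lambda>\<omega>. \<mu>' \<omega> * f \<omega>)" by (rule int_bdd[OF P(2) f b])
  have im: "integrable M \<mu>" "integrable M \<mu>'" using P by (auto simp: priors_def)
  have ia: "integrable M (\<lambda>\<omega>. \<bar>\<mu> \<omega> - \<mu>' \<omega>\<bar>)" using im by auto
  have "(\<integral>\<omega>. \<mu> \<omega> * f \<omega> \<partial>M) - (\<integral>\<omega>. \<mu>' \<omega> * f \<omega> \<partial>M)
      = (\<integral>\<omega>. \<mu> \<omega> * f \<omega> - \<mu>' \<omega> * f \<omega> \<partial>M)"
    using i1 i2 by simp
  also have "\<dots> \<le> (\<integral>\<omega>. \<bar>\<mu> \<omega> - \<mu>' \<omega>\<bar> \<partial>M)"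
  proof (rule integral_mono)
    show "integrable M (\<lambda>\<omega>. \<mu> \<omega> * f \<omega> - \<mu>' \<omega> * f \<omega>)" using i1 i2 by auto
    show "integrable M (\<lambda>\<omega>. \<bar>\<mu> \<omega> - \<mu>' \<omega>\<bar>)" by (rule ia)
    fix x assume x: "x \<in> space M"
    have "\<mu> x * f x - \<mu>' x * f x = (\<mu> x - \<mu>' x) * f x" by (simp add: algebra_simps)
    also have "\<dots> \<le> \<bar>(\<mu> x - \<mu>' x) * f x\<bar>" by simp
    also have "\<dots> \<le> \<bar>\<mu> x - \<mu>' x\<bar>" using b[OF x] by (simp add: abs_mult mult_left_le)
    finally show "\<mu> x * f x - \<mu>' x * f x \<le> \<bar>\<mu> x - \<mu>' x\<bar>" .
  qed
  finally show ?thesis by (simp add: l1dist_def)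
qed

lemma scheme_bd:
  assumes "\<pi> \<in> schemes M" "\<omega> \<in> space M"
  shows "0 \<le> \<pi> s \<omega> a \<and> \<pi> s \<omega> a \<le> 1"
proof -
  have n: "\<forall>b. 0 \<le> \<pi> s \<omega> b" and sm: "(\<Sum>b\<in>UNIV. \<pi> s \<omega> b) = 1"
    using assms by (auto simp: schemes_def)
  have "\<pi> s \<omega> a \<le> (\<Sum>b\<in>UNIV. \<pi> s \<omega> b)" by (rule member_le_sum) (use n in auto)
  then show ?thesis using n sm by auto
qed

lemma ex_max: "\<exists>b. \<forall>c. (f::'a::finite \<Rightarrow> real) c \<le> f b"
proof -
  obtain b where "b \<in> UNIV" "f b = Max (range f)" using Max_in[of "range f"] by fastforce
  then have "\<forall>c. f c \<le> f b" by (simp add: Max_ge)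
  then show ?thesis by blast
qed

lemma sigma_meas:
  fixes u :: "'s \<Rightarrow> 'w \<Rightarrow> 'a::finite \<Rightarrow> real"
  assumes u_meas[measurable]: "\<And>s' a. (\<lambda>\<omega>. u s' \<omega> a) \<in> borel_measurable M"
  shows "(\<lambda>\<omega>. (if \<forall>c. u s' \<omega> c \<le> u s' \<omega> b then 1 else 0) / (\<Sum>c\<in>UNIV. if \<forall>d. u s' \<omega> d \<le> u s' \<omega> c then 1 else 0 :: real)) \<in> borel_measurable M"
  by measurable

lemma Wset_meas:
  fixes u :: "'s \<Rightarrow> 'w \<Rightarrow> 'a::finite \<Rightarrow> real"
  assumes u_meas[measurable]: "\<And>s' a. (\<lambda>\<omega>. u s' \<omega> a) \<in> borel_measurable M"
  shows "Wset M u s a D \<in> sets M"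
  unfolding Wset_def by measurable

theorem mainTheorem7:
  fixes M :: "'w measure"
    and u Q :: "'s \<Rightarrow> 'w \<Rightarrow> 'a::finite \<Rightarrow> real"
    and \<mu> :: "'w \<Rightarrow> real" and s :: 's and H p0 D \<epsilon> :: real
  assumes u_meas: "\<And>s' a. (\<lambda>\<omega>. u s' \<omega> a) \<in> borel_measurable M"
    and u_range: "\<And>s' \<omega> a. \<omega> \<in> space M \<Longrightarrow> 0 \<le> u s' \<omega> a \<and> u s' \<omega> a \<le> 1"
    and Q_meas: "\<And>s' a. (\<lambda>\<omega>. Q s' \<omega> a) \<in> borel_measurable M"
    and Q_range: "\<And>s' \<omega> a. \<omega> \<in> space M \<Longrightarrow> 0 \<le> Q s' \<omega> a \<and> Q s' \<omega> a \<le> H"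
    and prior: "\<mu> \<in> priors M"
    and p0_pos: "p0 > 0" and D_pos: "D > 0"
    and reg: "regular M u \<mu> s p0 D"
    and eps: "\<epsilon> > 0"
  shows "Gap M u s \<mu> (l1ball M \<mu> \<epsilon>) Q \<le> H * \<epsilon> / (p0 * D)"
proof -
  have pm: "integrable M \<mu>" "(\<integral>\<omega>. \<mu> \<omega> \<partial>M) = 1" "\<And>\<omega>. \<omega> \<in> space M \<Longrightarrow> 0 \<le> \<mu> \<omega>"
    using prior by (auto simp: priors_def)
  have sp: "space M \<noteq> {}"
  proof
    assume "space M = {}"
    then have "0 \<le> (\<integral>\<omega>. - \<mu> \<omega> \<partial>M)" by (intro Bochner_Integration.integral_nonneg) auto
    then show False using pm by simp
  qed
  then obtain \<omega>0 where \<omega>0: "\<omega>0 \<in> space M" by blast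
  have H0: "0 \<le> H" using Q_range[OF \<omega>0] by (meson order_trans)
  define den where "den = (\<lambda>s' \<omega>. (\<Sum>c\<in>UNIV. if \<forall>d. u s' \<omega> d \<le> u s' \<omega> c then 1 else 0 :: real))"
  define \<sigma> where "\<sigma> = (\<lambda>s' \<omega> b. (if \<forall>c. u s' \<omega> c \<le> u s' \<omega> b then 1 else 0) / den s' \<omega>)"
  have den_ge: "den s' \<omega> \<ge> 1" for s' \<omega>
  proof -
    obtain b where b: "\<forall>c. u s' \<omega> c \<le> u s' \<omega> b" using ex_max by blast
    have "(if \<forall>d. u s' \<omega> d \<le> u s' \<omega> b then 1 else 0 :: real) \<le> den s' \<omega>"
      unfolding den_def by (rule member_le_sum) auto
    then show ?thesis using b by simp
  qed
  have \<sigma>_sch: "\<sigma> \<in> schemes M"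
  proof -
    have "(\<lambda>\<omega>. \<sigma> s' \<omega> b) \<in> borel_measurable M" for s' b
      unfolding \<sigma>_def den_def by (rule sigma_meas[OF u_meas])
    moreover have "0 \<le> \<sigma> s' \<omega> b" for s' \<omega> b
      unfolding \<sigma>_def using den_ge[of s' \<omega>] by auto
    moreover have "(\<Sum>b\<in>UNIV. \<sigma> s' \<omega> b) = 1" for s' \<omega>
      unfolding \<sigma>_def using den_ge[of s' \<omega>] by (simp add: sum_divide_distrib[symmetric] den_def)
    ultimately show ?thesis unfolding schemes_def by blast
  qed
  have \<sigma>_pos: "\<sigma> s' \<omega> b * (u s' \<omega> b - u s' \<omega> c) \<ge> 0" for s' \<omega> b c
    unfolding \<sigma>_def using den_ge[of s' \<omega>] by auto
  have \<sigma>_W: "\<sigma> s \<omega> a = 1" if w: "\<omega> \<in> Wset M u s a D" for \<omega> a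
  proof -
    have wa: "\<And>a'. a' \<noteq> a \<Longrightarrow> u s \<omega> a - u s \<omega> a' \<ge> D" using w by (auto simp: Wset_def)
    have amax: "\<forall>c. u s \<omega> c \<le> u s \<omega> a"
      using wa D_pos by (metis diff_ge_0_iff_ge less_eq_real_def order_trans order.refl)
    have eq: "(\<lambda>c. if \<forall>d. u s \<omega> d \<le> u s \<omega> c then 1 else 0 :: real) = (\<lambda>c. if c = a then 1 else 0)"
    proof
      fix c show "(if \<forall>d. u s \<omega> d \<le> u s \<omega> c then 1 else 0 :: real) = (if c = a then 1 else 0)"
      proof (cases "c = a")
        case True then show ?thesis using amax by simp
      next
        case False
        then have "u s \<omega> a - u s \<omega> c \<ge> D" by (rule wa)
        then have "\<not> u s \<omega> a \<le> u s \<omega> c" using D_pos by linarith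
        then show ?thesis using False by auto
      qed
    qed
    have "den s \<omega> = 1" unfolding den_def eq by simp
    then show ?thesis unfolding \<sigma>_def using amax by simp
  qed
  have \<sigma>_pers: "\<sigma> \<in> PersSet M (l1ball M \<mu> \<epsilon>) u"
  proof -
    have "\<sigma> \<in> Pers M \<mu>' u" if "\<mu>' \<in> priors M" for \<mu>'
    proof -
      have "\<And>\<omega>. \<omega> \<in> space M \<Longrightarrow> 0 \<le> \<mu>' \<omega>" using that by (auto simp: priors_def)
      then have "0 \<le> (\<integral>\<omega>. \<mu>' \<omega> * \<sigma> s' \<omega> a * (u s' \<omega> a - u s' \<omega> a') \<partial>M)" for s' a a'
        using \<sigma>_pos by (intro Bochner_Integration.integral_nonneg) (simp add: mult.assoc)
      then show ?thesis using \<sigma>_sch unfolding Pers_def by blast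
    qed
    then show ?thesis using \<sigma>_sch unfolding PersSet_def l1ball_def by blast
  qed
  have ball_mu: "\<mu> \<in> l1ball M \<mu> \<epsilon>"
    using prior eps by (simp add: l1ball_def l1dist_def)
  have g_meas: "(\<lambda>\<omega>. \<Sum>b\<in>UNIV. \<pi> s \<omega> b * Q s \<omega> b) \<in> borel_measurable M" if "\<pi> \<in> schemes M" for \<pi>
  proof -
    have "(\<lambda>\<omega>. \<pi> s \<omega> b) \<in> borel_measurable M" for b using that by (auto simp: schemes_def)
    then show ?thesis using Q_meas by (intro borel_measurable_sum borel_measurable_times) auto
  qed
  have g_bd: "0 \<le> (\<Sum>b\<in>UNIV. \<pi> s \<omega> b * Q s \<omega> b) \<and> (\<Sum>b\<in>UNIV. \<pi> s \<omega> b * Q s \<omega> b) \<le> H"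
    if "\<pi> \<in> schemes M" "\<omega> \<in> space M" for \<pi> \<omega>
  proof -
    have n: "\<And>b. 0 \<le> \<pi> s \<omega> b" and sm: "(\<Sum>b\<in>UNIV. \<pi> s \<omega> b) = 1"
      using that by (auto simp: schemes_def)
    have "0 \<le> (\<Sum>b\<in>UNIV. \<pi> s \<omega> b * Q s \<omega> b)"
      using n Q_range[OF that(2)] by (intro sum_nonneg) auto
    moreover have "(\<Sum>b\<in>UNIV. \<pi> s \<omega> b * Q s \<omega> b) \<le> (\<Sum>b\<in>UNIV. \<pi> s \<omega> b * H)"
      using n Q_range[OF that(2)] by (intro sum_mono mult_left_mono) auto
    moreover have "(\<Sum>b\<in>UNIV. \<pi> s \<omega> b * H) = H" using sm by (simp add: sum_distrib_right[symmetric])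
    ultimately show ?thesis by linarith
  qed
  have g_int: "integrable M (\<lambda>\<omega>. \<mu> \<omega> * (\<Sum>b\<in>UNIV. \<pi> s \<omega> b * Q s \<omega> b))" if "\<pi> \<in> schemes M" for \<pi>
    by (rule int_bdd[OF prior g_meas[OF that], of H]) (use g_bd[OF that] in auto)
  have pair_bd: "0 \<le> pairing M Q \<mu> \<pi> s \<and> pairing M Q \<mu> \<pi> s \<le> H" if "\<pi> \<in> schemes M" for \<pi>
  proof -
    have "0 \<le> pairing M Q \<mu> \<pi> s" unfolding pairing_def
      using g_bd[OF that] pm(3) by (intro Bochner_Integration.integral_nonneg) auto
    moreover have "pairing M Q \<mu> \<pi> s \<le> (\<integral>\<omega>. H * \<mu> \<omega> \<partial>M)" unfolding pairing_def
    proof (rule integral_mono)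
      show "integrable M (\<lambda>\<omega>. H * \<mu> \<omega>)" using pm(1) by auto
      fix \<omega> assume w: "\<omega> \<in> space M"
      show "\<mu> \<omega> * (\<Sum>b\<in>UNIV. \<pi> s \<omega> b * Q s \<omega> b) \<le> H * \<mu> \<omega>"
        using g_bd[OF that w] pm(3)[OF w] by (metis mult.commute mult_left_mono)
    qed (rule g_int[OF that])
    moreover have "(\<integral>\<omega>. H * \<mu> \<omega> \<partial>M) = H" using pm(2) by simp
    ultimately show ?thesis by linarith
  qed
  define \<delta> where "\<delta> = \<epsilon> / (p0 * D)"
  have \<delta>_pos: "\<delta> > 0" unfolding \<delta>_def using eps p0_pos D_pos by simp
  have K: "H * \<epsilon> / (p0 * D) = H * \<delta>" unfolding \<delta>_def by simp
  have key: "\<exists>\<pi>'\<in>PersSet M (l1ball M \<mu> \<epsilon>) u. pairing M Q \<mu> \<pi> s - H * \<delta> \<le> pairing M Q \<mu> \<pi>' s"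
    if \<pi>P: "\<pi> \<in> Pers M \<mu> u" for \<pi>
  proof -
    have \<pi>S: "\<pi> \<in> schemes M" using \<pi>P by (simp add: Pers_def)
    show ?thesis
    proof (cases "\<delta> \<ge> 1")
      case True
      have "pairing M Q \<mu> \<pi> s \<le> H" using pair_bd[OF \<pi>S] by simp
      also have "\<dots> \<le> H * \<delta>" using True H0 by (simp add: mult_le_cancel_left1)
      finally have "pairing M Q \<mu> \<pi> s - H * \<delta> \<le> pairing M Q \<mu> \<sigma> s"
        using pair_bd[OF \<sigma>_sch] by linarith
      then show ?thesis using \<sigma>_pers by blast
    next
      case False
      then have d1: "\<delta> < 1" by simp
      define \<pi>' where "\<pi>' = (\<lambda>s' \<omega> b. if s' = s then (1-\<delta>) * \<pi> s \<omega> b + \<delta> * \<sigma> s \<omega> b else \<sigma> s' \<omega> b)"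
      have \<pi>meas: "(\<lambda>\<omega>. \<pi> s' \<omega> b) \<in> borel_measurable M" for s' b using \<pi>S by (auto simp: schemes_def)
      have \<sigma>meas: "(\<lambda>\<omega>. \<sigma> s' \<omega> b) \<in> borel_measurable M" for s' b using \<sigma>_sch by (auto simp: schemes_def)
      have \<pi>'S: "\<pi>' \<in> schemes M"
      proof -
        have "(\<lambda>\<omega>. \<pi>' s' \<omega> b) \<in> borel_measurable M" for s' b
          unfolding \<pi>'_def using \<pi>meas \<sigma>meas by (cases "s' = s") auto
        moreover have "0 \<le> \<pi>' s' \<omega> b \<and> (\<Sum>b\<in>UNIV. \<pi>' s' \<omega> b) = 1" if "\<omega> \<in> space M" for s' \<omega> b
        proof -
          have a: "0 \<le> \<pi> s \<omega> b" "(\<Sum>b\<in>UNIV. \<pi> s \<omega> b) = 1" using \<pi>S that by (auto simp: schemes_def)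
          have b: "\<And>s'. 0 \<le> \<sigma> s' \<omega> b" "\<And>s'. (\<Sum>b\<in>UNIV. \<sigma> s' \<omega> b) = 1" using \<sigma>_sch that by (auto simp: schemes_def)
          show ?thesis
          proof (cases "s' = s")
            case True
            have "(\<Sum>b\<in>UNIV. \<pi>' s' \<omega> b) = (1-\<delta>) * (\<Sum>b\<in>UNIV. \<pi> s \<omega> b) + \<delta> * (\<Sum>b\<in>UNIV. \<sigma> s \<omega> b)"
              unfolding \<pi>'_def using True by (simp add: sum.distrib sum_distrib_left)
            then show ?thesis using a b d1 \<delta>_pos True unfolding \<pi>'_def by simp
          qed (use b in \<open>auto simp: \<pi>'_def\<close>)
        qed
        ultimately show ?thesis unfolding schemes_def by blast
      qed
      have "pairing M Q \<mu> \<pi>' s = (1-\<delta>) * pairing M Q \<mu> \<pi> s + \<delta> * pairing M Q \<mu> \<sigma> s"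
      proof -
        have "(\<lambda>\<omega>. \<mu> \<omega> * (\<Sum>b\<in>UNIV. \<pi>' s \<omega> b * Q s \<omega> b)) =
          (\<lambda>\<omega>. (1-\<delta>) * (\<mu> \<omega> * (\<Sum>b\<in>UNIV. \<pi> s \<omega> b * Q s \<omega> b)) + \<delta> * (\<mu> \<omega> * (\<Sum>b\<in>UNIV. \<sigma> s \<omega> b * Q s \<omega> b)))"
        proof
          fix \<omega>
          have "(\<Sum>b\<in>UNIV. \<pi>' s \<omega> b * Q s \<omega> b) = (\<Sum>b\<in>UNIV. (1-\<delta>) * (\<pi> s \<omega> b * Q s \<omega> b) + \<delta> * (\<sigma> s \<omega> b * Q s \<omega> b))"
            unfolding \<pi>'_def by (intro sum.cong) (auto simp: distrib_right)
          also have "\<dots> = (1-\<delta>) * (\<Sum>b\<in>UNIV. \<pi> s \<omega> b * Q s \<omega> b) + \<delta> * (\<Sum>b\<in>UNIV. \<sigma> s \<omega> b * Q s \<omega> b)"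
            by (simp only: sum.distrib sum_distrib_left)
          finally have e: "(\<Sum>b\<in>UNIV. \<pi>' s \<omega> b * Q s \<omega> b) = (1-\<delta>) * (\<Sum>b\<in>UNIV. \<pi> s \<omega> b * Q s \<omega> b) + \<delta> * (\<Sum>b\<in>UNIV. \<sigma> s \<omega> b * Q s \<omega> b)" .
          show "\<mu> \<omega> * (\<Sum>b\<in>UNIV. \<pi>' s \<omega> b * Q s \<omega> b) = (1-\<delta>) * (\<mu> \<omega> * (\<Sum>b\<in>UNIV. \<pi> s \<omega> b * Q s \<omega> b)) + \<delta> * (\<mu> \<omega> * (\<Sum>b\<in>UNIV. \<sigma> s \<omega> b * Q s \<omega> b))"
            unfolding e by (simp only: distrib_left mult.left_commute)
        qed
        then show ?thesis unfolding pairing_def using g_int[OF \<pi>S] g_int[OF \<sigma>_sch] by simp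
      qed
      moreover have "0 \<le> pairing M Q \<mu> \<sigma> s" "pairing M Q \<mu> \<pi> s \<le> H" using pair_bd \<pi>S \<sigma>_sch by auto
      ultimately have pay: "pairing M Q \<mu> \<pi> s - H * \<delta> \<le> pairing M Q \<mu> \<pi>' s"
      proof -
        assume e: "pairing M Q \<mu> \<pi>' s = (1-\<delta>) * pairing M Q \<mu> \<pi> s + \<delta> * pairing M Q \<mu> \<sigma> s"
          and s0: "0 \<le> pairing M Q \<mu> \<sigma> s" and pH: "pairing M Q \<mu> \<pi> s \<le> H"
        have e2: "pairing M Q \<mu> \<pi>' s = pairing M Q \<mu> \<pi> s - \<delta> * pairing M Q \<mu> \<pi> s + \<delta> * pairing M Q \<mu> \<sigma> s"
          using e by (simp add: left_diff_distrib)
        have "\<delta> * pairing M Q \<mu> \<pi> s \<le> \<delta> * H" using pH \<delta>_pos by (intro mult_left_mono) auto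
        moreover have "0 \<le> \<delta> * pairing M Q \<mu> \<sigma> s" using s0 \<delta>_pos by simp
        ultimately show ?thesis using e2 by (simp add: mult.commute)
      qed
      have pers: "\<pi>' \<in> Pers M \<mu>' u" if \<mu>'B: "\<mu>' \<in> l1ball M \<mu> \<epsilon>" for \<mu>'
      proof -
        have \<mu>'P: "\<mu>' \<in> priors M" and dist: "l1dist M \<mu> \<mu>' \<le> \<epsilon>" using \<mu>'B by (auto simp: l1ball_def)
        have \<mu>'nn: "\<And>\<omega>. \<omega> \<in> space M \<Longrightarrow> 0 \<le> \<mu>' \<omega>" using \<mu>'P by (auto simp: priors_def)
        have "0 \<le> (\<integral>\<omega>. \<mu>' \<omega> * \<pi>' s' \<omega> a * (u s' \<omega> a - u s' \<omega> a') \<partial>M)" for s' a a'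
        proof (cases "s' = s")
          case False
          then show ?thesis unfolding \<pi>'_def using \<sigma>_pos \<mu>'nn
            by (intro Bochner_Integration.integral_nonneg) (simp add: mult.assoc)
        next
          case True
          show ?thesis
          proof (cases "a = a'")
            case True then show ?thesis by simp
          next
            case False
            note aa = False
            define \<Delta> where "\<Delta> = (\<lambda>\<omega>. u s \<omega> a - u s \<omega> a')"
            have \<Delta>meas: "\<Delta> \<in> borel_measurable M" unfolding \<Delta>_def using u_meas by auto
            have \<Delta>bd: "\<bar>\<Delta> \<omega>\<bar> \<le> 1" if "\<omega> \<in> space M" for \<omega>
              using u_range[OF that, of s a] u_range[OF that, of s a'] unfolding \<Delta>_def by auto
            define f1 where "f1 = (\<lambda>\<omega>. \<pi> s \<omega> a * \<Delta> \<omega>)"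
            define f2 where "f2 = (\<lambda>\<omega>. \<sigma> s \<omega> a * \<Delta> \<omega>)"
            have f1m: "f1 \<in> borel_measurable M" unfolding f1_def using \<pi>meas \<Delta>meas by auto
            have f2m: "f2 \<in> borel_measurable M" unfolding f2_def using \<sigma>meas \<Delta>meas by auto
            have f1b: "\<bar>f1 \<omega>\<bar> \<le> 1" if "\<omega> \<in> space M" for \<omega>
              using scheme_bd[OF \<pi>S that, of s a] \<Delta>bd[OF that] unfolding f1_def
              by (simp add: abs_mult mult_le_one)
            have f2b: "\<bar>f2 \<omega>\<bar> \<le> 1" if "\<omega> \<in> space M" for \<omega>
              using scheme_bd[OF \<sigma>_sch that, of s a] \<Delta>bd[OF that] unfolding f2_def
              by (simp add: abs_mult mult_le_one)
            have i1: "integrable M (\<lambda>\<omega>. \<mu>' \<omega> * f1 \<omega>)" by (rule int_bdd[OF \<mu>'P f1m f1b])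
            have i2: "integrable M (\<lambda>\<omega>. \<mu>' \<omega> * f2 \<omega>)" by (rule int_bdd[OF \<mu>'P f2m f2b])
            have eqI: "(\<integral>\<omega>. \<mu>' \<omega> * \<pi>' s' \<omega> a * (u s' \<omega> a - u s' \<omega> a') \<partial>M)
                = (1-\<delta>) * (\<integral>\<omega>. \<mu>' \<omega> * f1 \<omega> \<partial>M) + \<delta> * (\<integral>\<omega>. \<mu>' \<omega> * f2 \<omega> \<partial>M)"
            proof -
              have "(\<lambda>\<omega>. \<mu>' \<omega> * \<pi>' s' \<omega> a * (u s' \<omega> a - u s' \<omega> a'))
                  = (\<lambda>\<omega>. (1-\<delta>) * (\<mu>' \<omega> * f1 \<omega>) + \<delta> * (\<mu>' \<omega> * f2 \<omega>))"
                unfolding \<pi>'_def f1_def f2_def \<Delta>_def using True by (simp add: algebra_simps)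
              then show ?thesis using i1 i2 by simp
            qed
            have "0 \<le> (\<integral>\<omega>. \<mu> \<omega> * \<pi> s \<omega> a * (u s \<omega> a - u s \<omega> a') \<partial>M)"
              using \<pi>P by (auto simp: Pers_def)
            then have "0 \<le> (\<integral>\<omega>. \<mu> \<omega> * f1 \<omega> \<partial>M)" unfolding f1_def \<Delta>_def by (simp add: mult.assoc)
            then have I1: "(\<integral>\<omega>. \<mu>' \<omega> * f1 \<omega> \<partial>M) \<ge> - \<epsilon>"
              using perturb[OF prior \<mu>'P f1m f1b] dist by linarith
            define W where "W = Wset M u s a D"
            have Wm: "W \<in> sets M" unfolding W_def by (rule Wset_meas[OF u_meas])
            have indm: "indicator W \<in> borel_measurable M" using Wm by simp
            have indb: "\<bar>indicator W \<omega> :: real\<bar> \<le> 1" for \<omega> by (simp add: indicator_def)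
            have regW: "(\<integral>\<omega>. \<mu> \<omega> * indicator W \<omega> \<partial>M) \<ge> p0"
              using reg unfolding regular_def W_def by blast
            have J: "(\<integral>\<omega>. \<mu>' \<omega> * indicator W \<omega> \<partial>M) \<ge> p0 - \<epsilon>"
              using perturb[OF prior \<mu>'P indm indb] regW dist by linarith
            have "(\<integral>\<omega>. \<mu>' \<omega> * f2 \<omega> \<partial>M) \<ge> (\<integral>\<omega>. D * (\<mu>' \<omega> * indicator W \<omega>) \<partial>M)"
            proof (rule integral_mono)
              show "integrable M (\<lambda>\<omega>. D * (\<mu>' \<omega> * indicator W \<omega>))"
                using int_bdd[OF \<mu>'P indm, of 1] indb by auto
              show "integrable M (\<lambda>\<omega>. \<mu>' \<omega> * f2 \<omega>)" by (rule i2)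
              fix \<omega> assume w: "\<omega> \<in> space M"
              show "D * (\<mu>' \<omega> * indicator W \<omega>) \<le> \<mu>' \<omega> * f2 \<omega>"
              proof (cases "\<omega> \<in> W")
                case True
                have "D \<le> \<Delta> \<omega>" using True aa unfolding W_def Wset_def \<Delta>_def by auto
                moreover have "\<sigma> s \<omega> a = 1" using \<sigma>_W True unfolding W_def by blast
                ultimately show ?thesis using True \<mu>'nn[OF w] unfolding f2_def
                  by (simp add: mult.commute[of "\<mu>' \<omega>"] mult_right_mono)
              next
                case False
                have "0 \<le> f2 \<omega>" unfolding f2_def \<Delta>_def using \<sigma>_pos by simp
                then show ?thesis using False \<mu>'nn[OF w] by simp
              qed
            qed
            then have I2: "(\<integral>\<omega>. \<mu>' \<omega> * f2 \<omega> \<partial>M) \<ge> D * (p0 - \<epsilon>)"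
            proof -
              assume h: "(\<integral>\<omega>. D * (\<mu>' \<omega> * indicator W \<omega>) \<partial>M) \<le> (\<integral>\<omega>. \<mu>' \<omega> * f2 \<omega> \<partial>M)"
              have "(\<integral>\<omega>. D * (\<mu>' \<omega> * indicator W \<omega>) \<partial>M) = D * (\<integral>\<omega>. \<mu>' \<omega> * indicator W \<omega> \<partial>M)"
                by (rule integral_mult_right_zero)
              moreover have "D * (p0 - \<epsilon>) \<le> D * (\<integral>\<omega>. \<mu>' \<omega> * indicator W \<omega> \<partial>M)"
                using J D_pos by (intro mult_left_mono) auto
              ultimately show ?thesis using h by linarith
            qed
            have "W \<noteq> {}"
            proof
              assume "W = {}"
              then have "(\<integral>\<omega>. \<mu> \<omega> * indicator W \<omega> \<partial>M) = 0" by simp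
              then show False using regW p0_pos by simp
            qed
            then obtain \<omega>1 where w1: "\<omega>1 \<in> W" by blast
            then have "\<omega>1 \<in> space M" "D \<le> u s \<omega>1 a - u s \<omega>1 a'" using aa unfolding W_def Wset_def by auto
            then have D1: "D \<le> 1" using u_range[of \<omega>1 s a] u_range[of \<omega>1 s a'] by linarith
            have t1: "(1-\<delta>) * (\<integral>\<omega>. \<mu>' \<omega> * f1 \<omega> \<partial>M) \<ge> (1-\<delta>) * (-\<epsilon>)"
              using I1 d1 by (intro mult_left_mono) auto
            have t2: "\<delta> * (\<integral>\<omega>. \<mu>' \<omega> * f2 \<omega> \<partial>M) \<ge> \<delta> * (D * (p0 - \<epsilon>))"
              using I2 \<delta>_pos by (intro mult_left_mono) auto
            have dD: "\<delta> * D = \<epsilon> / p0" unfolding \<delta>_def using D_pos by simp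
            have dDp: "\<delta> * D * p0 = \<epsilon>" using dD p0_pos by simp
            have "(1-\<delta>) * (-\<epsilon>) + \<delta> * (D * (p0 - \<epsilon>)) = - \<epsilon> + \<delta> * \<epsilon> + \<delta> * D * p0 - \<epsilon> * (\<delta> * D)"
              by (simp add: algebra_simps)
            also have "\<dots> = \<delta> * \<epsilon> - \<epsilon> * (\<delta> * D)" using dDp by simp
            also have "\<dots> = \<epsilon> * (\<delta> * (1 - D))" by (simp add: algebra_simps)
            also have "\<dots> \<ge> 0" using eps \<delta>_pos D1 by simp
            finally show ?thesis using eqI t1 t2 True by linarith
          qed
        qed
        then show ?thesis using \<pi>'S unfolding Pers_def by blast
      qed
      have "\<pi>' \<in> PersSet M (l1ball M \<mu> \<epsilon>) u" using \<pi>'S pers unfolding PersSet_def by blast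
      then show ?thesis using pay by blast
    qed
  qed
  define A where "A = (\<lambda>\<pi>. pairing M Q \<mu> \<pi> s) ` Pers M \<mu> u"
  define B where "B = (\<lambda>\<pi>. pairing M Q \<mu> \<pi> s) ` PersSet M (l1ball M \<mu> \<epsilon>) u"
  have Bne: "B \<noteq> {}" using \<sigma>_pers unfolding B_def by blast
  have Bbd: "bdd_above B" unfolding B_def bdd_above_def
    using pair_bd by (auto simp: PersSet_def)
  have \<sigma>P: "\<sigma> \<in> Pers M \<mu> u" using \<sigma>_pers ball_mu by (auto simp: PersSet_def)
  have Ane: "A \<noteq> {}" using \<sigma>P unfolding A_def by blast
  have "Sup A \<le> Sup B + H * \<delta>"
  proof (rule cSup_least[OF Ane])
    fix x assume "x \<in> A"
    then obtain \<pi> where \<pi>: "\<pi> \<in> Pers M \<mu> u" "x = pairing M Q \<mu> \<pi> s" unfolding A_def by blast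
    obtain \<pi>' where \<pi>': "\<pi>' \<in> PersSet M (l1ball M \<mu> \<epsilon>) u" "x - H * \<delta> \<le> pairing M Q \<mu> \<pi>' s"
      using key[OF \<pi>(1)] \<pi>(2) by blast
    have "pairing M Q \<mu> \<pi>' s \<le> Sup B" using \<pi>'(1) Bbd unfolding B_def by (intro cSup_upper) auto
    then show "x \<le> Sup B + H * \<delta>" using \<pi>'(2) by linarith
  qed
  then show ?thesis unfolding Gap_def K A_def B_def by linarith
qed
end
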